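(* Let $\varphi=\bigwedge_{j\in G}B_j\omega_j$ be a DBI normal formula, where $\varnothing\neq G\subseteq\mathcal{A}$. (1) If $i\notin\mathsf{ta}(\varphi)$, i.e., $i\notin G$, then for every formula $\sigma$ and every pointed Kripke model $(\mathcal{M},v)$: $\mathcal{M},v\vDash B_i\sigma$ iff $\mathcal{M}\odot\mathcal{U}_\varphi,(v,0)\vDash B_i\sigma$. (2) If $i\in\mathsf{ta}(\varphi)$ but $\omega_i=\bigwedge_{j\in H}B_j\pi_j$ has no propositional component, then for every purely propositional formula $\chi$ and every pointed Kripke model $(\mathcal{M},v)$: $\mathcal{M},v\vDash B_i\chi$ iff $\mathcal{M}\odot\mathcal{U}_\varphi,(v,0)\vDash B_i\chi$.
   Context: Agents $\mathcal{A}=\{1,\dots,n\}$, $n>1$; language $\mathcal{L}$: $\varphi ::= p \mid \neg\varphi \mid (\varphi\wedge\varphi)\mid B_i\varphi$, $\top$ the usual tautology. Kripke model $\mathcal{M}=\langle S,R,V\rangle$ (nonempty $S$, $R_i\subseteq S\times S$, $V:\mathit{Prop}\to 2^S$), standard truth. Action model $\mathcal{U}=\langle E,Q,\mathsf{pre}\rangle$ (nonempty $E$, $Q_i\subseteq E\times E$, $\mathsf{pre}:E\to\mathcal{L}$). Pointed update of $(\mathcal{M},w)$ with $(\mathcal{U},\alpha)$, defined iff $\mathcal{M},w\vDash\mathsf{pre}(\alpha)$: with $T=\{(x,\beta)\in S\times E\mid\mathcal{M},x\vDash\mathsf{pre}(\beta)\}$, $\mathcal{M}\odot\mathcal{U}=\langle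 S^{\mathcal U},R^{\mathcal U},V^{\mathcal U}\rangle$ where $S^{\mathcal U}$ is the smallest subset of $T$ containing $(w,\alpha)$ closed under: $(x,\beta)\in S^{\mathcal U}$, $(u,\gamma)\in T$, $xR_iu$, $\beta Q_i\gamma$ imply $(u,\gamma)\in S^{\mathcal U}$; $R^{\mathcal U}_i$ relates $(x,\beta),(u,\gamma)\in S^{\mathcal U}$ iff $xR_iu$ and $\beta Q_i\gamma$; $V^{\mathcal U}(p)=\{(x,\beta)\in S^{\mathcal U}\mid x\in V(p)\}$. Target agents: $\mathsf{ta}(p)=\varnothing$, $\mathsf{ta}(\neg\phi)=\mathsf{ta}(\phi)$, $\mathsf{ta}(\phi\wedge\psi)=\mathsf{ta}(\phi)\cup\mathsf{ta}(\psi)$, $\mathsf{ta}(B_i\phi)=\{i\}$. DBI formulas: $\varphi ::= B_i\xi \mid B_i(\xi\wedge\varphi)\mid(\varphi\wedge\varphi)\mid B_i\varphi$, $\xi$ purely propositional. DBI normal: $B_i\xi$ always; $B_i\varphi$, $B_i(\xi\wedge\varphi)$ iff $\varphi$ DBI normal and $i\notin\mathsf{ta}(\varphi)$; $\varphi\wedge\psi$ iff both DBI normal and $\mathsf{ta}(\varphi)\cap\mathsf{ta}(\psi)=\varnothing$. Action model $\mathcal{U}_\varphi=\langle E^\varphi,Q^\varphi,\mathsf{pre}^\varphi\rangle$ for DBI normal $\varphi$, recursively; always $E^\varphi=\{0,-1\}\sqcup D^\varphi$, $\varnothing\ne D^\varphi\subseteq\{1,2,\dots\}$, $\mathsf{pre}^\varphi(0)=\mathsf{pre}^\varphi(-1)=\top$;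 $\underline{Q}_j:=Q_j\cap((E\setminus\{0\})\times(E\setminus\{0\}))$. (1) $\varphi=B_i\xi$: $D=\{m\}$, $\mathsf{pre}(m)=\xi$, $Q_j=\{(0,-1),(m,-1),(-1,-1)\}$ ($j\ne i$), $Q_i=\{(0,m),(m,m),(-1,-1)\}$. (2) $\varphi=B_i\psi$: fresh $m\ge1$, $m\notin D^\psi$; $D^\varphi=D^\psi\sqcup\{m\}$; $\mathsf{pre}^\varphi$ extends $\mathsf{pre}^\psi$ with $\mathsf{pre}^\varphi(m)=\top$; $Q^\varphi_j=\underline{Q}^\psi_j\cup\{(0,-1)\}\cup\{(m,k)\mid(0,k)\in Q^\psi_j\}$ ($j\ne i$); $Q^\varphi_i=\underline{Q}^\psi_i\cup\{(0,m),(m,m)\}$. (3) $\varphi=B_i(\xi\wedge\psi)$: as (2) but $\mathsf{pre}^\varphi(m)=\xi$. (4) $\varphi=\psi\wedge\theta$: with $D^\psi\cap D^\theta=\varnothing$, $D^\varphi=D^\psi\sqcup D^\theta$, $\mathsf{pre}^\varphi=\mathsf{pre}^\psi\cup\mathsf{pre}^\theta$, $Q^\varphi_j=\underline{Q}^\psi_j\cup\underline{Q}^\theta_j\cup\{(0,k)\mid(0,k)\in Q^\psi_j\cup Q^\theta_j, k\in D^\psi\sqcup D^\theta\}\cup\{(0,-1)\mid\text{no such }k\text{ exists}\}$. *)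

theory Defs
  imports Main
begin

datatype ('ag, 'p) fm =
    Prop 'p
  | Neg "('ag, 'p) fm"
  | Conj "('ag, 'p) fm" "('ag, 'p) fm"
  | Bel 'ag "('ag, 'p) fm"

definition top :: "('ag, 'p) fm" where
  "top = Neg (Conj (Prop undefined) (Neg (Prop undefined)))"

fun propositional :: "('ag, 'p) fm \<Rightarrow> bool" where
  "propositional (Prop p) = True"
| "propositional (Neg a) = propositional a"
| "propositional (Conj a b) = (propositional a \<and> propositional b)"
| "propositional (Bel i a) = False"

fun ta :: "('ag, 'p) fm \<Rightarrow> 'ag set" where
  "ta (Prop p) = {}"
| "ta (Neg a) = ta a"
| "ta (Conj a b) = ta a \<union> ta b"
| "ta (Bel i a) = {i}"

inductive dbi_normal :: "('ag, 'p) fm \<Rightarrow> bool" where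
  dbi_prop: "propositional \<xi> \<Longrightarrow> dbi_normal (Bel i \<xi>)"
| dbi_bel: "dbi_normal \<psi> \<Longrightarrow> i \<notin> ta \<psi> \<Longrightarrow> dbi_normal (Bel i \<psi>)"
| dbi_bel_conj: "propositional \<xi> \<Longrightarrow> dbi_normal \<psi> \<Longrightarrow> i \<notin> ta \<psi>
      \<Longrightarrow> dbi_normal (Bel i (Conj \<xi> \<psi>))"
| dbi_conj: "dbi_normal \<psi> \<Longrightarrow> dbi_normal \<theta> \<Longrightarrow> ta \<psi> \<inter> ta \<theta> = {}
      \<Longrightarrow> dbi_normal (Conj \<psi> \<theta>)"

fun conjuncts :: "('ag, 'p) fm \<Rightarrow> ('ag, 'p) fm set" where
  "conjuncts (Conj a b) = conjuncts a \<union> conjuncts b"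
| "conjuncts (Prop p) = {Prop p}"
| "conjuncts (Neg a) = {Neg a}"
| "conjuncts (Bel i a) = {Bel i a}"

inductive bconj :: "('ag, 'p) fm \<Rightarrow> bool" where
  "bconj (Bel j \<pi>)"
| "bconj a \<Longrightarrow> bconj b \<Longrightarrow> bconj (Conj a b)"

record ('ag, 'w, 'p) kripke =
  worlds :: "'w set"
  rel :: "'ag \<Rightarrow> ('w \<times> 'w) set"
  val :: "'p \<Rightarrow> 'w set"

definition kripke :: "('ag, 'w, 'p, 'z) kripke_scheme \<Rightarrow> bool" where
  "kripke M \<longleftrightarrow> worlds M \<noteq> {} \<and> (\<forall>i. rel M i \<subseteq> worlds M \<times> worlds M)
     \<and> (\<forall>p. val M p \<subseteq> worlds M)"

fun sat :: "('ag, 'w, 'p) kripke \<Rightarrow> 'w \<Rightarrow> ('ag, 'p) fm \<Rightarrow> bool" where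
  "sat M w (Prop p) = (w \<in> val M p)"
| "sat M w (Neg a) = (\<not> sat M w a)"
| "sat M w (Conj a b) = (sat M w a \<and> sat M w b)"
| "sat M w (Bel i a) = (\<forall>u. (w, u) \<in> rel M i \<longrightarrow> sat M u a)"

record ('ag, 'p) amodel =
  adom :: "int set"   \<comment> \<open>the set D; the events are {0,-1} plus D\<close>
  aQ :: "'ag \<Rightarrow> (int \<times> int) set"
  apre :: "int \<Rightarrow> ('ag, 'p) fm"

definition events :: "('ag, 'p) amodel \<Rightarrow> int set" where
  "events U = {0, -1} \<union> adom U"

definition Tset :: "('ag, 'w, 'p) kripke \<Rightarrow> ('ag, 'p) amodel \<Rightarrow> ('w \<times> int) set" where
  "Tset M U = {(x, \<beta>). x \<in> worlds M \<and> \<beta> \<in> events U \<and> sat M x (apre U \<beta>)}"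

inductive_set reach :: "('ag, 'w, 'p) kripke \<Rightarrow> ('ag, 'p) amodel \<Rightarrow> 'w \<Rightarrow> int \<Rightarrow> ('w \<times> int) set"
  for M U w \<alpha> where
  base: "(w, \<alpha>) \<in> Tset M U \<Longrightarrow> (w, \<alpha>) \<in> reach M U w \<alpha>"
| step: "(x, \<beta>) \<in> reach M U w \<alpha> \<Longrightarrow> (u, \<gamma>) \<in> Tset M U \<Longrightarrow> (x, u) \<in> rel M i
      \<Longrightarrow> (\<beta>, \<gamma>) \<in> aQ U i \<Longrightarrow> (u, \<gamma>) \<in> reach M U w \<alpha>"

text \<open>Pointed update of (M,w) with (U,alpha) (meaningful when M,w satisfies pre alpha).\<close>
definition update :: "('ag, 'w, 'p) kripke \<Rightarrow> ('ag, 'p) amodel \<Rightarrow> 'w \<Rightarrow> int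
    \<Rightarrow> ('ag, 'w \<times> int, 'p) kripke" where
  "update M U w \<alpha> =
    \<lparr> worlds = reach M U w \<alpha>,
      rel = (\<lambda>i. {((x, \<beta>), (u, \<gamma>)). (x, \<beta>) \<in> reach M U w \<alpha> \<and> (u, \<gamma>) \<in> reach M U w \<alpha>
                     \<and> (x, u) \<in> rel M i \<and> (\<beta>, \<gamma>) \<in> aQ U i}),
      val = (\<lambda>p. {(x, \<beta>). (x, \<beta>) \<in> reach M U w \<alpha> \<and> x \<in> val M p}) \<rparr>"

definition qbar :: "('ag, 'p) amodel \<Rightarrow> 'ag \<Rightarrow> (int \<times> int) set" where
  "qbar U j = aQ U j \<inter> ((events U - {0}) \<times> (events U - {0}))"

inductive is_U :: "('ag, 'p) fm \<Rightarrow> ('ag, 'p) amodel \<Rightarrow> bool" where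
  U_prop: "propositional \<xi> \<Longrightarrow> m \<ge> 1 \<Longrightarrow>
    is_U (Bel i \<xi>)
      \<lparr> adom = {m},
        aQ = (\<lambda>j. if j = i then {(0, m), (m, m), (-1, -1)} else {(0, -1), (m, -1), (-1, -1)}),
        apre = (\<lambda>e. if e = m then \<xi> else top) \<rparr>"
| U_bel: "is_U \<psi> U \<Longrightarrow> m \<ge> 1 \<Longrightarrow> m \<notin> adom U \<Longrightarrow>
    is_U (Bel i \<psi>)
      \<lparr> adom = adom U \<union> {m},
        aQ = (\<lambda>j. if j = i then qbar U i \<union> {(0, m), (m, m)}
                  else qbar U j \<union> {(0, -1)} \<union> {(m, k) | k. (0, k) \<in> aQ U j}),
        apre = (apre U)(m := top) \<rparr>"
| U_bel_conj: "propositional \<xi> \<Longrightarrow> is_U \<psi> U \<Longrightarrow> m \<ge> 1 \<Longrightarrow> m \<notin> adom U \<Longrightarrow>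
    is_U (Bel i (Conj \<xi> \<psi>))
      \<lparr> adom = adom U \<union> {m},
        aQ = (\<lambda>j. if j = i then qbar U i \<union> {(0, m), (m, m)}
                  else qbar U j \<union> {(0, -1)} \<union> {(m, k) | k. (0, k) \<in> aQ U j}),
        apre = (apre U)(m := \<xi>) \<rparr>"
| U_conj: "is_U \<psi> U1 \<Longrightarrow> is_U \<theta> U2 \<Longrightarrow> adom U1 \<inter> adom U2 = {} \<Longrightarrow>
    is_U (Conj \<psi> \<theta>)
      \<lparr> adom = adom U1 \<union> adom U2,
        aQ = (\<lambda>j. qbar U1 j \<union> qbar U2 j
                 \<union> {(0, k) | k. (0, k) \<in> aQ U1 j \<union> aQ U2 j \<and> k \<in> adom U1 \<union> adom U2}
                 \<union> (if \<exists>k. (0, k) \<in> aQ U1 j \<union> aQ U2 j \<and> k \<in> adom U1 \<union> adom U2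
                    then {} else {(0, -1)})),
        apre = (\<lambda>e. if e \<in> adom U1 then apre U1 e else apre U2 e) \<rparr>"

end

theory Submission
  imports Defs
begin

lemma sat_top[simp]: "sat M w top"
  by (simp add: top_def)

lemma inv1: "is_U \<phi> U \<Longrightarrow> \<forall>k\<in>adom U. k \<ge> 1"
  by (induction rule: is_U.induct) auto

lemma inv2: "is_U \<phi> U \<Longrightarrow> apre U 0 = top \<and> apre U (-1) = top"
proof (induction rule: is_U.induct)
  case (U_conj \<psi> U1 \<theta> U2)
  then show ?case using inv1[OF U_conj(1)] by force
qed auto

lemma inv3: "is_U \<phi> U \<Longrightarrow> (-1,k) \<in> aQ U j \<longleftrightarrow> k = -1"
proof (induction arbitrary: k j rule: is_U.induct)
  case (U_prop \<xi> m i)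
  then show ?case by auto
next
  case (U_bel \<psi> U m i)
  then show ?case using inv1[OF U_bel(1)] by (auto simp: qbar_def events_def)
next
  case (U_bel_conj \<xi> \<psi> U m i)
  then show ?case using inv1[OF U_bel_conj(2)] by (auto simp: qbar_def events_def)
next
  case (U_conj \<psi> U1 \<theta> U2)
  then show ?case by (auto simp: qbar_def events_def)
qed

lemma inv45: "is_U \<phi> U \<Longrightarrow>
   (j \<notin> ta \<phi> \<longrightarrow> (\<forall>k. (0,k) \<in> aQ U j \<longleftrightarrow> k = -1)) \<and>
   (j \<in> ta \<phi> \<longrightarrow> (\<exists>k\<in>adom U. (0,k) \<in> aQ U j) \<and> (\<forall>k. (0,k) \<in> aQ U j \<longrightarrow> k \<in> adom U))"
proof (induction arbitrary: j rule: is_U.induct)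
  case (U_prop \<xi> m i)
  then show ?case by auto
next
  case (U_bel \<psi> U m i)
  then show ?case using inv1[OF U_bel(1)] by (auto simp: qbar_def events_def)
next
  case (U_bel_conj \<xi> \<psi> U m i)
  then show ?case using inv1[OF U_bel_conj(2)] by (auto simp: qbar_def events_def)
next
  case (U_conj \<psi> U1 \<theta> U2)
  have n1: "-1 \<notin> adom U1" and n2: "-1 \<notin> adom U2"
    using inv1[OF U_conj(1)] inv1[OF U_conj(2)] by force+
  show ?case
  proof (cases "j \<in> ta \<psi> \<union> ta \<theta>")
    case True
    then have ex: "\<exists>k. (0, k) \<in> aQ U1 j \<union> aQ U2 j \<and> k \<in> adom U1 \<union> adom U2"
      using U_conj.IH[of j] by auto
    show ?thesis using True ex by (auto simp: qbar_def events_def)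
  next
    case False
    then have a: "\<And>k. (0,k) \<in> aQ U1 j \<longleftrightarrow> k = -1" "\<And>k. (0,k) \<in> aQ U2 j \<longleftrightarrow> k = -1"
      using U_conj.IH[of j] by auto
    have ex: "\<not> (\<exists>k. (0, k) \<in> aQ U1 j \<union> aQ U2 j \<and> k \<in> adom U1 \<union> adom U2)"
      using a n1 n2 by auto
    show ?thesis using False ex a by (auto simp: qbar_def events_def)
  qed
qed

lemma bconj_np: "bconj \<omega> \<Longrightarrow> \<not> propositional \<omega>"
  by (induction rule: bconj.induct) auto

lemma top_event: "is_U \<phi> U \<Longrightarrow> Bel i \<omega> \<in> conjuncts \<phi> \<Longrightarrow> bconj \<omega> \<Longrightarrow>
   \<exists>k\<in>adom U. (0,k) \<in> aQ U i \<and> apre U k = top"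
proof (induction rule: is_U.induct)
  case (U_prop \<xi> m i)
  then show ?case using bconj_np by auto
next
  case (U_bel \<psi> U m i)
  then show ?case by auto
next
  case (U_bel_conj \<xi> \<psi> U m i)
  then show ?case using bconj_np by (auto elim: bconj.cases)
next
  case (U_conj \<psi> U1 \<theta> U2)
  show ?case
  proof (cases "Bel i \<omega> \<in> conjuncts \<psi>")
    case True
    then obtain k where "k \<in> adom U1" "(0,k) \<in> aQ U1 i" "apre U1 k = top"
      using U_conj by auto
    then show ?thesis by auto
  next
    case False
    then have "Bel i \<omega> \<in> conjuncts \<theta>" using U_conj by auto
    then obtain k where "k \<in> adom U2" "(0,k) \<in> aQ U2 i" "apre U2 k = top"
      using U_conj by auto
    then show ?thesis using U_conj(3) by auto
  qed
qed

lemma base_in: "is_U \<phi> U \<Longrightarrow> v \<in> worlds M \<Longrightarrow> (v,0) \<in> reach M U v 0"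
  using inv2[of \<phi> U] by (auto intro!: reach.base simp: Tset_def events_def)

lemma sat_prop: "propositional \<chi> \<Longrightarrow> (x,b) \<in> reach M U v a \<Longrightarrow>
   sat (update M U v a) (x,b) \<chi> = sat M x \<chi>"
  by (induction \<chi>) (auto simp: update_def)

lemma sat_copy: "is_U \<phi> U \<Longrightarrow> kripke M \<Longrightarrow> (x,-1) \<in> reach M U v a \<Longrightarrow>
   sat (update M U v a) (x,-1) \<sigma> = sat M x \<sigma>"
proof (induction \<sigma> arbitrary: x)
  case (Prop p)
  then show ?case by (simp add: update_def)
next
  case (Neg \<sigma>)
  then show ?case by simp
next
  case (Conj \<sigma>1 \<sigma>2)
  then show ?case by simp
next
  case (Bel j \<sigma>)
  have succ: "(u,-1) \<in> reach M U v a" if "(x,u) \<in> rel M j" for u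
  proof -
    have "u \<in> worlds M" using Bel(3) that by (auto simp: kripke_def)
    then have "(u,-1) \<in> Tset M U" using inv2[OF Bel(2)] by (auto simp: Tset_def events_def)
    then show ?thesis using reach.step[OF Bel(4) _ that] inv3[OF Bel(2)] by auto
  qed
  have "sat (update M U v a) (x,-1) (Bel j \<sigma>) \<longleftrightarrow>
        (\<forall>u. (x,u) \<in> rel M j \<longrightarrow> sat (update M U v a) (u,-1) \<sigma>)"
    using Bel(4) succ inv3[OF Bel(2)] by (auto simp: update_def)
  also have "\<dots> \<longleftrightarrow> (\<forall>u. (x,u) \<in> rel M j \<longrightarrow> sat M u \<sigma>)"
    using Bel.IH[OF Bel(2) Bel(3)] succ by auto
  finally show ?case by simp
qed

theorem corollary1:
  fixes \<phi> :: "('ag :: finite, 'p) fm" and U :: "('ag, 'p) amodel" and i :: 'ag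
  assumes "card (UNIV :: 'ag set) \<ge> 2"
    and "dbi_normal \<phi>"
    and "is_U \<phi> U"
  shows "(i \<notin> ta \<phi> \<longrightarrow>
            (\<forall>(\<sigma> :: ('ag, 'p) fm) (M :: ('ag, 'w, 'p) kripke) v.
               kripke M \<and> v \<in> worlds M \<longrightarrow>
               (sat M v (Bel i \<sigma>) \<longleftrightarrow> sat (update M U v 0) (v, 0) (Bel i \<sigma>))))
       \<and> (\<forall>\<omega>. i \<in> ta \<phi> \<and> Bel i \<omega> \<in> conjuncts \<phi> \<and> bconj \<omega> \<longrightarrow>
            (\<forall>(\<chi> :: ('ag, 'p) fm) (M :: ('ag, 'w, 'p) kripke) v.
               propositional \<chi> \<and> kripke M \<and> v \<in> worlds M \<longrightarrow>
               (sat M v (Bel i \<chi>) \<longleftrightarrow> sat (update M U v 0) (v, 0) (Bel i \<chi>))))"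
proof (intro conjI impI allI; (elim conjE)?)
  fix \<sigma> :: "('ag, 'p) fm" and M :: "('ag, 'w, 'p) kripke" and v
  assume ni: "i \<notin> ta \<phi>" and km: "kripke M" and vw: "v \<in> worlds M"
  have q0: "\<And>k. (0,k) \<in> aQ U i \<longleftrightarrow> k = -1" using inv45[OF assms(3), of i] ni by auto
  have b: "(v,0) \<in> reach M U v 0" by (rule base_in[OF assms(3) vw])
  have succ: "(u,-1) \<in> reach M U v 0" if "(v,u) \<in> rel M i" for u
  proof -
    have "u \<in> worlds M" using km that by (auto simp: kripke_def)
    then have "(u,-1) \<in> Tset M U" using inv2[OF assms(3)] by (auto simp: Tset_def events_def)
    then show ?thesis using reach.step[OF b _ that] q0 by auto
  qed
  have "sat (update M U v 0) (v,0) (Bel i \<sigma>) \<longleftrightarrow>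
        (\<forall>u. (v,u) \<in> rel M i \<longrightarrow> sat (update M U v 0) (u,-1) \<sigma>)"
    using b succ q0 by (auto simp: update_def)
  also have "\<dots> \<longleftrightarrow> (\<forall>u. (v,u) \<in> rel M i \<longrightarrow> sat M u \<sigma>)"
    using sat_copy[OF assms(3) km] succ by auto
  finally show "sat M v (Bel i \<sigma>) \<longleftrightarrow> sat (update M U v 0) (v, 0) (Bel i \<sigma>)" by simp
next
  fix \<omega> and \<chi> :: "('ag, 'p) fm" and M :: "('ag, 'w, 'p) kripke" and v
  assume c: "Bel i \<omega> \<in> conjuncts \<phi>" and bc: "bconj \<omega>" and pc: "propositional \<chi>"
    and km: "kripke M" and vw: "v \<in> worlds M"
  obtain k where k: "k \<in> adom U" "(0,k) \<in> aQ U i" "apre U k = top"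
    using top_event[OF assms(3) c bc] by auto
  have b: "(v,0) \<in> reach M U v 0" by (rule base_in[OF assms(3) vw])
  have succ: "(u,k) \<in> reach M U v 0" if "(v,u) \<in> rel M i" for u
  proof -
    have "u \<in> worlds M" using km that by (auto simp: kripke_def)
    then have "(u,k) \<in> Tset M U" using k by (auto simp: Tset_def events_def)
    then show ?thesis using reach.step[OF b _ that] k by auto
  qed
  show "sat M v (Bel i \<chi>) \<longleftrightarrow> sat (update M U v 0) (v, 0) (Bel i \<chi>)"
  proof
    assume "sat M v (Bel i \<chi>)"
    then have h: "\<And>u. (v,u) \<in> rel M i \<Longrightarrow> sat M u \<chi>" by simp
    show "sat (update M U v 0) (v, 0) (Bel i \<chi>)"
    proof (simp only: sat.simps, intro allI impI)
      fix y assume "((v,0), y) \<in> rel (update M U v 0) i"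
      then obtain u g where y: "y = (u,g)" "(u,g) \<in> reach M U v 0" "(v,u) \<in> rel M i"
        by (cases y) (auto simp: update_def)
      show "sat (update M U v 0) y \<chi>" using y h sat_prop[OF pc y(2)] by simp
    qed
  next
    assume h: "sat (update M U v 0) (v, 0) (Bel i \<chi>)"
    show "sat M v (Bel i \<chi>)"
    proof (simp, intro allI impI)
      fix u assume r: "(v,u) \<in> rel M i"
      have "((v,0),(u,k)) \<in> rel (update M U v 0) i"
        using b succ[OF r] r k by (simp add: update_def)
      then have "sat (update M U v 0) (u,k) \<chi>" using h by simp
      then show "sat M u \<chi>" using sat_prop[OF pc succ[OF r]] by simp
    qed
  qed
qed

end
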